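(* Let $I$ be a finite set of positive integers. Then there are real numbers $c_k$, $k\in I\cup\{0\}$, such that $$d(I;z)=c_0+\sum_{k\in I}c_k\, z^{\underline{k}},$$ and $\frac{1}{k!}\le |c_k|\le 1$ for every $k\in I\cup\{0\}$.
   Context: $z^{\underline{k}}=z(z-1)\cdots(z-k+1)$ is the falling factorial ($z^{\underline 0}=1$). $d(I;z)$ is the descent polynomial: the unique polynomial whose value at each integer $n>\max(I\cup\{0\})$ is the number of permutations $\pi\in\mathfrak S_n$ with $\{j\mid\pi_j>\pi_{j+1}\}=I$. *)

theory Defs
  imports "HOL-Computational_Algebra.Polynomial" "HOL-Combinatorics.Permutations"
begin

definition descent_set :: "nat \<Rightarrow> (nat \<Rightarrow> nat) \<Rightarrow> nat set" where
  "descent_set n \<sigma> = {j \<in> {1..<n}. \<sigma> j > \<sigma> (Suc j)}"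

definition descent_count :: "nat set \<Rightarrow> nat \<Rightarrow> nat" where
  "descent_count I n = card {\<sigma>. \<sigma> permutes {1..n} \<and> descent_set n \<sigma> = I}"

definition descent_poly :: "nat set \<Rightarrow> real poly" where
  "descent_poly I = (THE p. \<forall>n::nat. n > Max (I \<union> {0}) \<longrightarrow>
       poly p (real n) = real (descent_count I n))"

definition falling_poly :: "nat \<Rightarrow> real poly" where
  "falling_poly k = (\<Prod>i<k. [:- real i, 1:])"

end

theory Submission imports Defs "HOL-Combinatorics.Multiset_Permutations"
begin

definition ldes :: "nat list \<Rightarrow> nat set" where
  "ldes xs = {j \<in> {1..<length xs}. xs!(j-1) > xs!j}"

definition LL :: "nat set \<Rightarrow> nat set \<Rightarrow> nat" where
  "LL J A = card {xs. distinct xs \<and> set xs = A \<and> ldes xs = J}"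

lemma ldes_take: "ldes (take m xs) = ldes xs \<inter> {..<m}"
  unfolding ldes_def by auto

lemma ldes_sorted_drop:
  assumes "ldes xs \<subseteq> {..m}"
  shows "sorted (drop m xs)"
  unfolding sorted_iff_nth_Suc
proof (intro allI impI)
  fix i assume i: "Suc i < length (drop m xs)"
  have "Suc (m+i) \<notin> ldes xs" using assms by auto
  then have "\<not> xs!(m+i) > xs!(Suc (m+i))" using i unfolding ldes_def by auto
  then show "drop m xs ! i \<le> drop m xs ! Suc i" using i by auto
qed

lemma ldes_append_sorted:
  assumes "length ys = m" "sorted zs"
  shows "ldes (ys @ zs) - {m} = ldes ys"
proof -
  have "j \<notin> ldes (ys@zs)" if "j > m" for j
  proof
    assume j: "j \<in> ldes (ys@zs)"
    then have jl: "j < length ys + length zs" unfolding ldes_def by auto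
    have "zs!(j-1-m) \<le> zs!(j-m)" using assms jl that
      by (intro sorted_nth_mono) auto
    moreover have "(ys@zs)!(j-1) = zs!(j-1-m)" "(ys@zs)!j = zs!(j-m)"
      using assms(1) that by (auto simp: nth_append)
    ultimately show False using j unfolding ldes_def by auto
  qed
  moreover have "ldes (ys@zs) \<inter> {..<m} = ldes ys"
    using ldes_take[of m "ys@zs"] assms(1) by simp
  ultimately have "ldes (ys @ zs) - {m} = ldes (ys@zs) \<inter> {..<m}"
    using linorder_neqE_nat by blast
  then show ?thesis using \<open>ldes (ys@zs) \<inter> {..<m} = ldes ys\<close> by simp
qed


lemma order_iso_exists:
  fixes A B :: "nat set"
  assumes "finite A" "finite B" "card A = card B"
  shows "\<exists>h. inj_on h A \<and> h ` A = B \<and> (\<forall>x\<in>A. \<forall>y\<in>A. x < y \<longrightarrow> h x < h y)"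
proof -
  define bs where "bs = sorted_list_of_set B"
  define h where "h x = bs ! card {y\<in>A. y < x}" for x
  have lbs: "length bs = card A" using assms by (simp add: bs_def)
  have lt: "card {y\<in>A. y < x} < card A" if "x \<in> A" for x
    using assms(1) that by (intro psubset_card_mono) auto
  have mono: "h x < h y" if "x \<in> A" "y \<in> A" "x < y" for x y
  proof -
    have "card {z\<in>A. z < x} < card {z\<in>A. z < y}"
      using assms(1) that by (intro psubset_card_mono) auto
    moreover have "sorted_wrt (<) bs" by (simp add: bs_def)
    ultimately show ?thesis unfolding h_def using lt[OF that(2)] lbs
      by (intro sorted_wrt_nth_less[of "(<)" bs]) auto
  qed
  have inj: "inj_on h A"
  proof (rule inj_onI)
    fix x y assume "x \<in> A" "y \<in> A" "h x = h y"
    then show "x = y" using mono[of x y] mono[of y x] by (cases x y rule: linorder_cases) auto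
  qed
  have sub: "h ` A \<subseteq> B"
  proof
    fix z assume "z \<in> h ` A"
    then obtain x where "x \<in> A" "z = h x" by auto
    then have "z \<in> set bs" unfolding h_def using lt lbs by auto
    then show "z \<in> B" using assms by (simp add: bs_def)
  qed
  have "card (h ` A) = card B" using card_image[OF inj] assms by simp
  then have "h ` A = B" using sub assms(2) by (simp add: card_subset_eq)
  then show ?thesis using inj mono by blast
qed

lemma LL_le:
  fixes A B :: "nat set"
  assumes "finite A" "finite B" "card A = card B"
  shows "LL J A \<le> LL J B"
proof -
  obtain h where h: "inj_on h A" "h ` A = B" "\<forall>x\<in>A. \<forall>y\<in>A. x < y \<longrightarrow> h x < h y"
    using order_iso_exists[OF assms] by blast
  have iff: "h x < h y \<longleftrightarrow> x < y" if "x \<in> A" "y \<in> A" for x y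
    using h(3) that by (metis h(1) inj_on_eq_iff not_less_iff_gr_or_eq)
  let ?SA = "{xs. distinct xs \<and> set xs = A \<and> ldes xs = J}"
  let ?SB = "{xs. distinct xs \<and> set xs = B \<and> ldes xs = J}"
  have fin: "finite ?SB"
    by (rule finite_subset[of _ "permutations_of_set B"]) (auto simp: permutations_of_set_def assms finite_permutations_of_set[of B, unfolded permutations_of_set_def])
  have "inj_on (map h) ?SA"
  proof (rule inj_onI)
    fix xs ys assume "xs \<in> ?SA" "ys \<in> ?SA" "map h xs = map h ys"
    then show "xs = ys" using h(1) by (auto intro: map_inj_on)
  qed
  moreover have "map h ` ?SA \<subseteq> ?SB"
  proof
    fix zs assume "zs \<in> map h ` ?SA"
    then obtain xs where xs: "distinct xs" "set xs = A" "ldes xs = J" "zs = map h xs" by auto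
    have "distinct zs" using xs h(1) by (simp add: distinct_map)
    moreover have "set zs = B" using xs h(2) by simp
    moreover have "ldes zs = ldes xs"
    proof -
      have "h (xs!(j-1)) > h (xs!j) \<longleftrightarrow> xs!(j-1) > xs!j" if "j \<in> {1..<length xs}" for j
        using that xs(2) by (intro iff) auto
      then show ?thesis unfolding ldes_def xs(4) by auto
    qed
    ultimately show "zs \<in> ?SB" using xs by auto
  qed
  ultimately show ?thesis unfolding LL_def using card_inj_on_le[OF _ _ fin] by blast
qed

lemma LL_card:
  fixes A B :: "nat set"
  assumes "finite A" "finite B" "card A = card B"
  shows "LL J A = LL J B"
  by (intro antisym LL_le) (use assms in auto)


lemma LL_rec:
  fixes A :: "nat set"
  assumes fA: "finite A" and mA: "m \<le> card A" and mJ: "m \<notin> J'" and Jm: "J' \<subseteq> {..<m}"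
  shows "LL (insert m J') A + LL J' A = (card A choose m) * LL J' {1..m}"
proof -
  define S where "S = {xs. distinct xs \<and> set xs = A \<and> ldes xs - {m} = J'}"
  define S1 where "S1 = {xs. distinct xs \<and> set xs = A \<and> ldes xs = insert m J'}"
  define S2 where "S2 = {xs. distinct xs \<and> set xs = A \<and> ldes xs = J'}"
  define T where "T = {ys. distinct ys \<and> set ys \<subseteq> A \<and> length ys = m \<and> ldes ys = J'}"
  have finP: "finite {xs. distinct xs \<and> set xs = A}"
    using finite_permutations_of_set[of A] by (simp add: permutations_of_set_def conj_commute)
  have "S = S1 \<union> S2"
  proof -
    have "ldes xs - {m} = J' \<longleftrightarrow> ldes xs = insert m J' \<or> ldes xs = J'" for xs
      using mJ by auto
    then show ?thesis unfolding S_def S1_def S2_def by auto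
  qed
  moreover have "S1 \<inter> S2 = {}" unfolding S1_def S2_def using mJ by auto
  moreover have "finite S1" "finite S2" unfolding S1_def S2_def
    by (rule finite_subset[OF _ finP], blast)+
  ultimately have cS: "card S = LL (insert m J') A + LL J' A"
    unfolding LL_def S1_def[symmetric] S2_def[symmetric] by (simp add: card_Un_disjoint)
  define f' where "f' ys = ys @ sorted_list_of_set (A - set ys)" for ys
  have "bij_betw (take m) S T"
  proof (rule bij_betw_byWitness[where f'=f'])
    show "\<forall>xs\<in>S. f' (take m xs) = xs"
    proof
      fix xs assume xs: "xs \<in> S"
      then have d: "distinct xs" and s: "set xs = A" and l: "ldes xs - {m} = J'" by (auto simp: S_def)
      have "ldes xs \<subseteq> {..m}" using l Jm by auto
      then have so: "sorted (drop m xs)" by (rule ldes_sorted_drop)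
      have u: "set (take m xs) \<union> set (drop m xs) = A" using s by (metis append_take_drop_id set_append)
      have "set (take m xs) \<inter> set (drop m xs) = {}" using set_take_disj_set_drop_if_distinct[OF d, of m m] by simp
      then have "set (drop m xs) = A - set (take m xs)" using u by blast
      then have "sorted_list_of_set (A - set (take m xs)) = drop m xs"
        using so d by (metis distinct_drop sorted_list_of_set_sort_remdups distinct_remdups_id sorted_sort_id)
      then show "f' (take m xs) = xs" by (simp add: f'_def)
    qed
    show "\<forall>ys\<in>T. take m (f' ys) = ys" by (auto simp: T_def f'_def)
    show "take m ` S \<subseteq> T"
    proof
      fix ys assume "ys \<in> take m ` S"
      then obtain xs where xs: "xs \<in> S" "ys = take m xs" by auto
      then have d: "distinct xs" and s: "set xs = A" and l: "ldes xs - {m} = J'" by (auto simp: S_def)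
      have "length xs = card A" using d s distinct_card by fastforce
      then have "length ys = m" using xs mA by simp
      moreover have "ldes ys = J'"
        using ldes_take[of m xs] xs(2) l Jm by auto
      moreover have "distinct ys" "set ys \<subseteq> A" using xs d s by (auto dest: in_set_takeD)
      ultimately show "ys \<in> T" by (simp add: T_def)
    qed
    show "f' ` T \<subseteq> S"
    proof
      fix zs assume "zs \<in> f' ` T"
      then obtain ys where ys: "ys \<in> T" "zs = f' ys" by auto
      then have d: "distinct ys" and s: "set ys \<subseteq> A" and l: "length ys = m" and ld: "ldes ys = J'"
        by (auto simp: T_def)
      have "distinct zs" using ys d fA by (auto simp: f'_def)
      moreover have "set zs = A" using ys s fA by (auto simp: f'_def)
      moreover have "ldes zs - {m} = J'" using ldes_append_sorted[OF l, of "sorted_list_of_set (A - set ys)"] ys ld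
        by (simp add: f'_def)
      ultimately show "zs \<in> S" by (simp add: S_def)
    qed
  qed
  then have cST: "card S = card T" by (rule bij_betw_same_card)
  define U where "U B = {ys. distinct ys \<and> set ys = B \<and> ldes ys = J'}" for B
  have TU: "T = (\<Union>B\<in>{B. B \<subseteq> A \<and> card B = m}. U B)"
    unfolding T_def U_def using distinct_card by fastforce
  have finU: "finite (U B)" if "B \<subseteq> A" for B
    using finite_permutations_of_set[of B] unfolding U_def permutations_of_set_def
    by (rule finite_subset[rotated]) auto
  have "card T = (\<Sum>B\<in>{B. B \<subseteq> A \<and> card B = m}. card (U B))"
    unfolding TU
    by (rule card_UN_disjoint) (use fA finU in \<open>auto simp: U_def\<close>)
  also have "\<dots> = (\<Sum>B\<in>{B. B \<subseteq> A \<and> card B = m}. LL J' {1..m})"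
  proof (rule sum.cong[OF refl])
    fix B assume "B \<in> {B. B \<subseteq> A \<and> card B = m}"
    then have "finite B" "card B = card {1..m}" using fA finite_subset by auto
    then show "card (U B) = LL J' {1..m}" unfolding U_def LL_def[symmetric]
      by (intro LL_card) auto
  qed
  also have "\<dots> = (card A choose m) * LL J' {1..m}" using n_subsets[OF fA, of m] by simp
  finally show ?thesis using cS cST by simp
qed


lemma ldes_nil_sorted: "ldes xs = {} \<Longrightarrow> sorted xs"
  using ldes_sorted_drop[of xs 0] by simp

lemma sorted_ldes: "sorted zs \<Longrightarrow> ldes zs = {}"
  using ldes_append_sorted[of "[]" 0 zs] by (auto simp: ldes_def)

lemma LL_empty: "finite A \<Longrightarrow> LL {} A = 1"
proof -
  assume fA: "finite A"
  have "{xs. distinct xs \<and> set xs = A \<and> ldes xs = {}} = {sorted_list_of_set A}"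
  proof (intro set_eqI iffI)
    fix xs assume "xs \<in> {xs. distinct xs \<and> set xs = A \<and> ldes xs = {}}"
    then have "distinct xs" "set xs = A" "sorted xs" using ldes_nil_sorted by auto
    then show "xs \<in> {sorted_list_of_set A}"
      by (metis singletonI sorted_list_of_set_sort_remdups distinct_remdups_id sorted_sort_id)
  next
    fix xs assume "xs \<in> {sorted_list_of_set A}"
    then show "xs \<in> {xs. distinct xs \<and> set xs = A \<and> ldes xs = {}}"
      using fA sorted_ldes by auto
  qed
  then show ?thesis by (simp add: LL_def)
qed

lemma ldes_snoc: "ldes (ys @ [a]) = ldes ys \<union> (if ys \<noteq> [] \<and> last ys > a then {length ys} else {})"
proof -
  have 1: "j \<in> ldes (ys@[a]) \<longleftrightarrow> j \<in> ldes ys" if "j < length ys" for j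
    using that by (auto simp: ldes_def nth_append)
  have 2: "length ys \<in> ldes (ys@[a]) \<longleftrightarrow> last ys > a" if "ys \<noteq> []"
    using that by (auto simp: ldes_def nth_append last_conv_nth Suc_le_eq)
  have 3: "ldes ys \<subseteq> {..<length ys}" "ldes (ys@[a]) \<subseteq> {..<Suc (length ys)}" "0 \<notin> ldes (ys@[a])"
    by (auto simp: ldes_def)
  show ?thesis
  proof (intro set_eqI)
    fix j
    consider "j < length ys" | "j = length ys" | "j > length ys" by linarith
    then show "j \<in> ldes (ys @ [a]) \<longleftrightarrow> j \<in> ldes ys \<union> (if ys \<noteq> [] \<and> last ys > a then {length ys} else {})"
    proof cases
      case 1 then show ?thesis using \<open>j < length ys \<Longrightarrow> _\<close> by auto
    next
      case 2 then show ?thesis using \<open>ys \<noteq> [] \<Longrightarrow> _\<close> 3 by (cases "ys = []") auto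
    next
      case 3 then show ?thesis using \<open>ldes ys \<subseteq> _\<close> \<open>ldes (ys@[a]) \<subseteq> _\<close> by auto
    qed
  qed
qed

lemma ldes_map_Suc: "ldes (map Suc xs) = ldes xs"
  unfolding ldes_def by auto

lemma ldes_exists:
  "J \<subseteq> {1..<k} \<Longrightarrow> \<exists>xs. distinct xs \<and> set xs = {1..k} \<and> ldes xs = J"
proof (induction k arbitrary: J)
  case 0
  then show ?case by (intro exI[of _ "[]"]) (auto simp: ldes_def)
next
  case (Suc k)
  have "J - {k} \<subseteq> {1..<k}" using Suc.prems by auto
  then obtain xs where xs: "distinct xs" "set xs = {1..k}" "ldes xs = J - {k}" using Suc.IH by blast
  have lx: "length xs = k" using xs distinct_card by fastforce
  show ?case
  proof (cases "k \<in> J")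
    case True
    then have k1: "k \<ge> 1" using Suc.prems by auto
    define ys where "ys = map Suc xs @ [1]"
    have "distinct ys" using xs by (auto simp: ys_def distinct_map)
    moreover have "set ys = {1..Suc k}"
    proof -
      have "Suc ` {1..k} = {2..Suc k}" by (simp add: image_Suc_atLeastAtMost)
      then show ?thesis using xs by (auto simp: ys_def)
    qed
    moreover have "ldes ys = J"
    proof -
      have "map Suc xs \<noteq> []" using lx k1 by auto
      moreover have "last (map Suc xs) > 1"
        using \<open>map Suc xs \<noteq> []\<close> xs(2) last_in_set[of xs] by (auto simp: last_map)
      ultimately show ?thesis using xs True lx by (auto simp: ys_def ldes_snoc ldes_map_Suc)
    qed
    ultimately show ?thesis by blast
  next
    case False
    define ys where "ys = xs @ [Suc k]"
    have "distinct ys" using xs by (auto simp: ys_def)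
    moreover have "set ys = {1..Suc k}" using xs by (auto simp: ys_def)
    moreover have "ldes ys = J"
    proof -
      have "\<not> last xs > Suc k" if "xs \<noteq> []" using xs(2) last_in_set[OF that] by auto
      then show ?thesis using xs False by (auto simp: ys_def ldes_snoc)
    qed
    ultimately show ?thesis by blast
  qed
qed

lemma LL_ge1: "J \<subseteq> {1..<k} \<Longrightarrow> LL J {1..k} \<ge> 1"
proof -
  assume "J \<subseteq> {1..<k}"
  then obtain xs where xs: "distinct xs" "set xs = {1..k}" "ldes xs = J" using ldes_exists by blast
  have "finite {xs. distinct xs \<and> set xs = {1..k} \<and> ldes xs = J}"
    using finite_permutations_of_set[of "{1..k}"] unfolding permutations_of_set_def
    by (rule finite_subset[rotated]) auto
  moreover have "{xs. distinct xs \<and> set xs = {1..k} \<and> ldes xs = J} \<noteq> {}" using xs by auto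
  ultimately show ?thesis unfolding LL_def by (simp add: Suc_le_eq card_gt_0_iff)
qed

lemma LL_le_fact: "finite A \<Longrightarrow> LL J A \<le> fact (card A)"
proof -
  assume fA: "finite A"
  have "LL J A \<le> card (permutations_of_set A)" unfolding LL_def
    by (rule card_mono[OF finite_permutations_of_set]) (auto simp: permutations_of_set_def)
  then show ?thesis using fA by simp
qed


lemma descent_count_LL: "descent_count I n = LL I {1..n}"
proof -
  define P where "P = {\<sigma>. \<sigma> permutes {1..n} \<and> descent_set n \<sigma> = I}"
  define Q where "Q = {xs. distinct xs \<and> set xs = {1..n} \<and> ldes xs = I}"
  define F where "F \<sigma> = map \<sigma> [1..<Suc n]" for \<sigma> :: "nat \<Rightarrow> nat"
  define G where "G xs = (\<lambda>j. if j \<in> {1..n} then xs!(j-1) else j)" for xs :: "nat list"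
  have Fnth: "F \<sigma> ! (j-1) = \<sigma> j" if "j \<in> {1..n}" for \<sigma> j
    using that by (auto simp: F_def nth_map nth_upt simp del: upt_Suc)
  have Fnth': "F \<sigma> ! j = \<sigma> (Suc j)" if "j < n" for \<sigma> j
    using that by (auto simp: F_def nth_map nth_upt simp del: upt_Suc)
  have lenQ: "length xs = n" if "xs \<in> Q" for xs
    using that distinct_card[of xs] by (auto simp: Q_def)
  have "bij_betw F P Q"
  proof (rule bij_betw_byWitness[where f'=G])
    show "\<forall>\<sigma>\<in>P. G (F \<sigma>) = \<sigma>"
    proof
      fix \<sigma> assume "\<sigma> \<in> P"
      then have p: "\<sigma> permutes {1..n}" by (simp add: P_def)
      show "G (F \<sigma>) = \<sigma>"
      proof
        fix j show "G (F \<sigma>) j = \<sigma> j"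
          using Fnth[of j \<sigma>] permutes_not_in[OF p, of j] by (auto simp: G_def)
      qed
    qed
    show "\<forall>xs\<in>Q. F (G xs) = xs"
    proof
      fix xs assume xs: "xs \<in> Q"
      show "F (G xs) = xs"
        by (rule nth_equalityI) (auto simp: F_def G_def lenQ[OF xs] nth_map nth_upt simp del: upt_Suc)
    qed
    show "F ` P \<subseteq> Q"
    proof
      fix ys assume "ys \<in> F ` P"
      then obtain \<sigma> where s: "\<sigma> permutes {1..n}" "descent_set n \<sigma> = I" "ys = F \<sigma>"
        by (auto simp: P_def)
      have "distinct ys" using s permutes_inj_on[OF s(1), of "{1..n}"]
        by (auto simp: F_def distinct_map atLeastLessThanSuc_atLeastAtMost simp del: upt_Suc)
      moreover have "set ys = {1..n}" using s permutes_image[OF s(1)]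
        by (auto simp: F_def atLeastLessThanSuc_atLeastAtMost simp del: upt_Suc)
      moreover have "ldes ys = I"
      proof -
        have "ldes ys = descent_set n \<sigma>"
          unfolding ldes_def descent_set_def s(3)
          using Fnth Fnth' by (auto simp: F_def)
        then show ?thesis using s by simp
      qed
      ultimately show "ys \<in> Q" by (simp add: Q_def)
    qed
    show "G ` Q \<subseteq> P"
    proof
      fix \<sigma> assume "\<sigma> \<in> G ` Q"
      then obtain xs where xs: "xs \<in> Q" "\<sigma> = G xs" by auto
      have d: "distinct xs" and st: "set xs = {1..n}" and ld: "ldes xs = I"
        using xs by (auto simp: Q_def)
      have l: "length xs = n" using lenQ[OF xs(1)] .
      have inj: "inj_on \<sigma> {1..n}"
      proof (rule inj_onI)
        fix i j assume "i \<in> {1..n}" "j \<in> {1..n}" "\<sigma> i = \<sigma> j"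
        then have "xs!(i-1) = xs!(j-1)" "i - 1 < length xs" "j - 1 < length xs" using xs l by (auto simp: G_def)
        then have "i - 1 = j - 1" using d nth_eq_iff_index_eq by blast
        then show "i = j" using \<open>i \<in> {1..n}\<close> \<open>j \<in> {1..n}\<close> by auto
      qed
      have sub: "\<sigma> ` {1..n} \<subseteq> {1..n}"
      proof
        fix y assume "y \<in> \<sigma> ` {1..n}"
        then obtain j where "j \<in> {1..n}" "y = xs!(j-1)" using xs by (auto simp: G_def)
        then have "y \<in> set xs" using l by auto
        then show "y \<in> {1..n}" using st by simp
      qed
      have "\<sigma> ` {1..n} = {1..n}" using sub card_image[OF inj]
        by (simp add: card_subset_eq)
      then have "bij_betw \<sigma> {1..n} {1..n}" using inj by (simp add: bij_betw_def)
      then have "\<sigma> permutes {1..n}" by (rule bij_imp_permutes) (auto simp: xs G_def)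
      moreover have "descent_set n \<sigma> = I"
      proof -
        have "descent_set n \<sigma> = ldes xs"
          unfolding ldes_def descent_set_def xs(2) G_def l by auto
        then show ?thesis using ld by simp
      qed
      ultimately show "\<sigma> \<in> P" by (simp add: P_def)
    qed
  qed
  then have "card P = card Q" by (rule bij_betw_same_card)
  then show ?thesis by (simp add: descent_count_def LL_def P_def Q_def)
qed

lemma poly_falling: "k \<le> n \<Longrightarrow> poly (falling_poly k) (real n) = real (n choose k) * fact k"
proof (induction k)
  case 0
  then show ?case by (simp add: falling_poly_def)
next
  case (Suc k)
  have "poly (falling_poly (Suc k)) (real n) = poly (falling_poly k) (real n) * (real n - real k)"
    by (simp add: falling_poly_def poly_prod algebra_simps)
  also have "\<dots> = real (n choose k) * fact k * (real n - real k)" using Suc by simp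
  also have "\<dots> = real (n choose Suc k) * fact (Suc k)"
  proof -
    have "(n choose Suc k) * Suc k = (n choose k) * (n - k)"
      by (metis binomial_absorb_comp binomial_absorption mult.commute)
    then have eq: "real (n choose Suc k) * real (Suc k) = real (n choose k) * (real n - real k)"
      using Suc.prems by (metis of_nat_diff of_nat_mult Suc_leD)
    have e2: "real (n choose Suc k) * fact (Suc k) = (real (n choose Suc k) * real (Suc k)) * fact k"
      by (simp only: fact_Suc mult.assoc)
    show ?thesis unfolding e2 eq by (simp only: mult_ac)
  qed
  finally show ?case .
qed


lemma poly_eq_eventually:
  fixes p q :: "real poly"
  assumes "\<And>n. n > N \<Longrightarrow> poly p (real n) = poly q (real n)"
  shows "p = q"
proof (rule ccontr)
  assume "p \<noteq> q"
  then have "p - q \<noteq> 0" by simp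
  then have fin: "finite {x. poly (p - q) x = 0}" by (rule poly_roots_finite)
  have "real ` {N<..} \<subseteq> {x. poly (p - q) x = 0}" using assms by auto
  then have "finite (real ` {N<..})" using fin finite_subset by blast
  then have "finite {N<..}" using finite_imageD inj_on_of_nat by blast
  then obtain M where "\<forall>x\<in>{N<..}. x < M" using finite_nat_set_iff_bounded by blast
  then have "Suc (N + M) < M" by auto
  then show False by simp
qed

lemma main_ind:
  fixes I :: "nat set"
  assumes "finite I" "0 \<notin> I"
  shows "\<exists>c :: nat \<Rightarrow> real.
    (\<forall>n. n > Max (I \<union> {0}) \<longrightarrow>
       poly ([:c 0:] + (\<Sum>k\<in>I. smult (c k) (falling_poly k))) (real n) = real (LL I {1..n})) \<and>
    (\<forall>k \<in> I \<union> {0}. 1 / fact k \<le> \<bar>c k\<bar> \<and> \<bar>c k\<bar> \<le> 1)"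
  using assms
proof (induction I rule: finite_linorder_max_induct)
  case empty
  show ?case by (intro exI[of _ "\<lambda>_. 1"]) (simp add: LL_empty)
next
  case (insert b A)
  have b0: "b \<noteq> 0" "0 \<notin> A" using insert.prems by auto
  obtain c' where c': "\<forall>n. n > Max (A \<union> {0}) \<longrightarrow>
       poly ([:c' 0:] + (\<Sum>k\<in>A. smult (c' k) (falling_poly k))) (real n) = real (LL A {1..n})"
    "\<forall>k \<in> A \<union> {0}. 1 / fact k \<le> \<bar>c' k\<bar> \<and> \<bar>c' k\<bar> \<le> 1"
    using insert.IH b0 by blast
  define \<beta> where "\<beta> = real (LL A {1..b})"
  define c where "c k = (if k = b then \<beta> / fact b else - c' k)" for k
  have bA: "b \<notin> A" using insert.hyps(2) by auto
  have Ab: "A \<subseteq> {..<b}" using insert.hyps(2) by auto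
  have MA: "Max (A \<union> {0}) < b"
  proof -
    have "Max (A \<union> {0}) \<in> A \<union> {0}" using insert.hyps(1) by (intro Max_in) auto
    then show ?thesis using insert.hyps(2) b0 by auto
  qed
  have MI: "Max (insert b A \<union> {0}) = b"
    using insert.hyps by (intro Max_eqI) auto
  have poly_eq: "[:c 0:] + (\<Sum>k\<in>insert b A. smult (c k) (falling_poly k)) =
     smult (\<beta> / fact b) (falling_poly b) - ([:c' 0:] + (\<Sum>k\<in>A. smult (c' k) (falling_poly k)))"
  proof -
    have "(\<Sum>k\<in>insert b A. smult (c k) (falling_poly k)) =
        smult (c b) (falling_poly b) + (\<Sum>k\<in>A. smult (c k) (falling_poly k))"
      using insert.hyps(1) bA by simp
    also have "(\<Sum>k\<in>A. smult (c k) (falling_poly k)) = - (\<Sum>k\<in>A. smult (c' k) (falling_poly k))"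
    proof -
      have "(\<Sum>k\<in>A. smult (c k) (falling_poly k)) = (\<Sum>k\<in>A. - smult (c' k) (falling_poly k))"
        by (rule sum.cong) (use bA in \<open>auto simp: c_def\<close>)
      then show ?thesis by (simp add: sum_negf)
    qed
    finally show ?thesis using b0 by (simp add: c_def)
  qed
  have pval: "poly ([:c 0:] + (\<Sum>k\<in>insert b A. smult (c k) (falling_poly k))) (real n)
      = real (LL (insert b A) {1..n})" if n: "n > b" for n
  proof -
    have rec: "LL (insert b A) {1..n} + LL A {1..n} = (n choose b) * LL A {1..b}"
      using LL_rec[of "{1..n}" b A] n bA Ab by simp
    have "poly ([:c 0:] + (\<Sum>k\<in>insert b A. smult (c k) (falling_poly k))) (real n)
       = \<beta> / fact b * (real (n choose b) * fact b) - real (LL A {1..n})"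
      unfolding poly_eq using c'(1) MA n poly_falling[of b n] by simp
    also have "\<dots> = real (n choose b) * \<beta> - real (LL A {1..n})" by simp
    also have "\<dots> = real (LL (insert b A) {1..n})"
      using arg_cong[OF rec, of real] unfolding \<beta>_def by (simp only: of_nat_add of_nat_mult)
    finally show ?thesis .
  qed
  have bnds: "1 / fact k \<le> \<bar>c k\<bar> \<and> \<bar>c k\<bar> \<le> 1" if "k \<in> insert b A \<union> {0}" for k
  proof (cases "k = b")
    case True
    have "A \<subseteq> {1..<b}"
    proof
      fix x assume "x \<in> A"
      then show "x \<in> {1..<b}" using Ab b0 by (cases x) auto
    qed
    then have g1: "1 \<le> \<beta>" unfolding \<beta>_def using LL_ge1 by simp
    have "\<beta> \<le> fact b" unfolding \<beta>_def using LL_le_fact[of "{1..b}" A]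
      by (metis card_atLeastAtMost diff_Suc_1 finite_atLeastAtMost of_nat_fact of_nat_le_iff)
    then show ?thesis using True g1 by (simp add: c_def divide_right_mono)
  next
    case False
    then show ?thesis using that c'(2) by (auto simp: c_def)
  qed
  show ?case
    by (intro exI[of _ c] conjI allI impI) (use MI pval bnds in auto)
qed

theorem lemma4p12:
  fixes I :: "nat set"
  assumes "finite I" and "0 \<notin> I"
  shows "\<exists>c :: nat \<Rightarrow> real.
           descent_poly I = [:c 0:] + (\<Sum>k\<in>I. smult (c k) (falling_poly k)) \<and>
           (\<forall>k \<in> I \<union> {0}. 1 / fact k \<le> \<bar>c k\<bar> \<and> \<bar>c k\<bar> \<le> 1)"
proof -
  obtain c where c: "\<forall>n. n > Max (I \<union> {0}) \<longrightarrow>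
       poly ([:c 0:] + (\<Sum>k\<in>I. smult (c k) (falling_poly k))) (real n) = real (LL I {1..n})"
    "\<forall>k \<in> I \<union> {0}. 1 / fact k \<le> \<bar>c k\<bar> \<and> \<bar>c k\<bar> \<le> 1"
    using main_ind[OF assms] by blast
  define p where "p = [:c 0:] + (\<Sum>k\<in>I. smult (c k) (falling_poly k))"
  have P: "\<forall>n::nat. n > Max (I \<union> {0}) \<longrightarrow> poly p (real n) = real (descent_count I n)"
    using c(1) by (simp add: p_def descent_count_LL)
  have "descent_poly I = p"
    unfolding descent_poly_def
  proof (rule the_equality)
    show "\<forall>n::nat. n > Max (I \<union> {0}) \<longrightarrow> poly p (real n) = real (descent_count I n)" by (rule P)
    fix q assume "\<forall>n::nat. n > Max (I \<union> {0}) \<longrightarrow> poly q (real n) = real (descent_count I n)"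
    then show "q = p" using P by (intro poly_eq_eventually[of "Max (I \<union> {0})"]) auto
  qed
  then show ?thesis using c(2) p_def by blast
qed

end
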